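(* Let $(b,0)$ be a tree over $X$. Then $X$ is totally bounded with respect to every metric on $X$ which is intrinsic with respect to some measure $m$ on $X$ with $m(X)<\infty$ if and only if every function of finite energy is bounded, i.e. $\widetilde D\subseteq\ell^\infty(X)$.
   Context: A weighted graph $(b,c)$ over a countably infinite set $X$ consists of a symmetric $b:X\times X\to[0,\infty)$ with $b(x,x)=0$ and $\sum_y b(x,y)<\infty$ for all $x$, and $c:X\to[0,\infty)$; here $c\equiv0$. A path is a finite sequence $(x_0,\dots,x_n)$ of pairwise distinct vertices with $b(x_{i-1},x_i)>0$. The graph is a tree if it is connected (any two distinct vertices are joined by a path) and there is no path $(x_0,\dots,x_n)$ with $n\ge2$ and $b(x_n,x_0)>0$. $\widetilde Q(f)=\frac12\sum_{x,y}b(x,y)|f(x)-f(y)|^2$ and $\widetilde D=\{f:X\to\mathbb C:\widetilde Q(f)<\infty\}$. A measure on $X$ is $m:X\to[0,\infty)$ with $m(A)=\sum_{x\in A}m(x)$; a metric $\sigma$ on $X$ is intrinsic with respect to $m$ if $\frac12\sum_y b(x,y)\sigma(x,y)^2\le m(x)$ for all $x$. *)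

theory Defs
  imports "HOL-Analysis.Analysis"
begin

text \<open>A weighted graph (b,0) over the vertex type 'a (c = 0).\<close>
definition weighted_graph :: "('a \<Rightarrow> 'a \<Rightarrow> real) \<Rightarrow> bool" where
  "weighted_graph b \<longleftrightarrow>
     (\<forall>x y. 0 \<le> b x y) \<and> (\<forall>x y. b x y = b y x) \<and> (\<forall>x. b x x = 0) \<and>
     (\<forall>x. (b x) summable_on UNIV)"

definition is_path :: "('a \<Rightarrow> 'a \<Rightarrow> real) \<Rightarrow> 'a list \<Rightarrow> bool" where
  "is_path b p \<longleftrightarrow> p \<noteq> [] \<and> distinct p \<and>
     (\<forall>i. Suc i < length p \<longrightarrow> 0 < b (p ! i) (p ! Suc i))"

definition is_tree :: "('a \<Rightarrow> 'a \<Rightarrow> real) \<Rightarrow> bool" where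
  "is_tree b \<longleftrightarrow>
     (\<forall>x y. x \<noteq> y \<longrightarrow> (\<exists>p. is_path b p \<and> hd p = x \<and> last p = y)) \<and>
     \<not> (\<exists>p. is_path b p \<and> 3 \<le> length p \<and> 0 < b (last p) (hd p))"

definition intrinsic :: "('a \<Rightarrow> 'a \<Rightarrow> real) \<Rightarrow> ('a \<Rightarrow> real) \<Rightarrow> ('a \<Rightarrow> 'a \<Rightarrow> real) \<Rightarrow> bool" where
  "intrinsic b m \<sigma> \<longleftrightarrow>
     (\<forall>x. (\<lambda>y. b x y * (\<sigma> x y)\<^sup>2) summable_on UNIV \<and>
          (1/2) * (\<Sum>\<^sub>\<infinity>y. b x y * (\<sigma> x y)\<^sup>2) \<le> m x)"

definition finite_energy :: "('a \<Rightarrow> 'a \<Rightarrow> real) \<Rightarrow> ('a \<Rightarrow> complex) \<Rightarrow> bool" where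
  "finite_energy b f \<longleftrightarrow>
     (\<lambda>(x, y). b x y * (cmod (f x - f y))\<^sup>2) summable_on UNIV"

end

theory Submission
  imports Defs
begin


lemma sum_le_infsum_nn:
  fixes g :: "'b \<Rightarrow> real"
  assumes "g summable_on A" "finite S" "S \<subseteq> A" "\<And>x. x \<in> A \<Longrightarrow> 0 \<le> g x"
  shows "sum g S \<le> infsum g A"
  using finite_sum_le_infsum[OF assms(1-3)] assms(4) by blast

lemma summable_by_bound:
  fixes g :: "'b \<Rightarrow> real"
  assumes "\<And>x. x \<in> A \<Longrightarrow> 0 \<le> g x" "\<And>S. finite S \<Longrightarrow> S \<subseteq> A \<Longrightarrow> sum g S \<le> B"
  shows "g summable_on A"
  apply (rule nonneg_bdd_above_summable_on)
  using assms(1) apply blast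
  unfolding bdd_above_def using assms(2) by (intro exI[of _ B]) auto

lemma pair_summable:
  fixes g :: "'a \<Rightarrow> 'a \<Rightarrow> real"
  assumes nn: "\<And>x y. 0 \<le> g x y"
    and sx: "\<And>x. g x summable_on UNIV"
    and bx: "\<And>x. infsum (g x) UNIV \<le> h x"
    and hs: "h summable_on UNIV" and hn: "\<And>x. 0 \<le> h x"
  shows "(\<lambda>(x,y). g x y) summable_on UNIV"
proof (rule summable_by_bound[where B="infsum h UNIV"])
  fix S :: "('a\<times>'a) set" assume S: "finite S" "S \<subseteq> UNIV"
  let ?A = "fst ` S" and ?B = "snd ` S"
  have "S \<subseteq> ?A \<times> ?B" by force
  hence "sum (\<lambda>(x,y). g x y) S \<le> sum (\<lambda>(x,y). g x y) (?A \<times> ?B)"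
    by (intro sum_mono2) (use S nn in auto)
  also have "\<dots> = (\<Sum>x\<in>?A. \<Sum>y\<in>?B. g x y)"
    by (simp add: sum.cartesian_product)
  also have "\<dots> \<le> (\<Sum>x\<in>?A. h x)"
  proof (rule sum_mono)
    fix x show "(\<Sum>y\<in>?B. g x y) \<le> h x"
      using sum_le_infsum_nn[OF sx[of x], of ?B] S nn bx[of x] by auto
  qed
  also have "\<dots> \<le> infsum h UNIV"
    using sum_le_infsum_nn[OF hs, of ?A] S hn by auto
  finally show "sum (\<lambda>(x,y). g x y) S \<le> infsum h UNIV" .
qed (use nn in auto)

lemma section_summable:
  fixes g :: "'a \<Rightarrow> 'a \<Rightarrow> real"
  assumes "(\<lambda>(x,y). g x y) summable_on UNIV"
  shows "g x summable_on UNIV"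
proof -
  have "(\<lambda>(x,y). g x y) summable_on (Pair x ` UNIV)"
    using summable_on_subset_banach[OF assms] by blast
  then have "((\<lambda>(x,y). g x y) \<circ> Pair x) summable_on UNIV"
    by (subst (asm) summable_on_reindex) (auto simp: inj_on_def)
  then show ?thesis by (simp add: o_def)
qed

lemma outer_summable:
  fixes g :: "'a \<Rightarrow> 'a \<Rightarrow> real"
  assumes "(\<lambda>(x,y). g x y) summable_on UNIV"
  shows "(\<lambda>x. infsum (g x) UNIV) summable_on UNIV"
  using summable_on_Sigma_banach[of g UNIV "\<lambda>_. UNIV"] assms by simp

lemma tail_small:
  fixes m :: "'a \<Rightarrow> real"
  assumes "m summable_on UNIV" "\<And>x. 0 \<le> m x" "e > 0"
  shows "\<exists>G. finite G \<and> (\<forall>S. finite S \<longrightarrow> S \<inter> G = {} \<longrightarrow> sum m S \<le> e)"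
proof -
  obtain F where F: "finite F" "dist (sum m F) (infsum m UNIV) \<le> e"
    using has_sum_finite_approximation[OF has_sum_infsum[OF assms(1)] assms(3)] by auto
  have "sum m S \<le> e" if "finite S" "S \<inter> F = {}" for S
  proof -
    have "sum m (F \<union> S) \<le> infsum m UNIV"
      using sum_le_infsum_nn[OF assms(1)] that F assms(2) by auto
    moreover have "sum m (F \<union> S) = sum m F + sum m S"
      using that F by (simp add: sum.union_disjoint Int_commute)
    ultimately show ?thesis using F(2) by (auto simp: dist_real_def)
  qed
  thus ?thesis using F by blast
qed

lemma geom_half_summable: "(\<lambda>x::'a::countable. (1/2::real) ^ to_nat x) summable_on UNIV"
proof -
  have "(\<lambda>n::nat. (1/2::real)^n) summable_on UNIV"
    by (subst summable_on_UNIV_nonneg_real_iff) (auto intro: summable_geometric)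
  hence "(\<lambda>n::nat. (1/2::real)^n) summable_on range (to_nat :: 'a \<Rightarrow> nat)"
    using summable_on_subset_banach by blast
  hence "((\<lambda>n::nat. (1/2::real)^n) \<circ> (to_nat :: 'a \<Rightarrow> nat)) summable_on UNIV"
    by (subst (asm) summable_on_reindex) auto
  thus ?thesis by (simp add: o_def)
qed



definition pl :: "('a \<Rightarrow> 'a \<Rightarrow> real) \<Rightarrow> 'a list \<Rightarrow> real" where
  "pl c p = (\<Sum>i<length p - 1. c (p!i) (p!Suc i))"

lemma chain_tri:
  assumes "Metric_space UNIV \<sigma>"
  shows "j \<le> n \<Longrightarrow> \<sigma> (q j) (q n) \<le> (\<Sum>i\<in>{j..<n}. \<sigma> (q i) (q (Suc i)))"
proof (induction n)
  case 0 thus ?case using Metric_space.zero[OF assms, of "q 0" "q 0"] by simp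
next
  case (Suc n)
  show ?case
  proof (cases "j = Suc n")
    case True thus ?thesis using Metric_space.zero[OF assms, of "q j" "q j"] by simp
  next
    case False
    hence "j \<le> n" using Suc by simp
    have "\<sigma> (q j) (q (Suc n)) \<le> \<sigma> (q j) (q n) + \<sigma> (q n) (q (Suc n))"
      using Metric_space.triangle[OF assms] by simp
    also have "\<dots> \<le> (\<Sum>i\<in>{j..<n}. \<sigma> (q i) (q (Suc i))) + \<sigma> (q n) (q (Suc n))"
      using Suc.IH[OF \<open>j \<le> n\<close>] by simp
    also have "\<dots> = (\<Sum>i\<in>{j..<Suc n}. \<sigma> (q i) (q (Suc i)))"
      using \<open>j \<le> n\<close> by simp
    finally show ?thesis .
  qed
qed

lemma path_lower:
  assumes ms: "Metric_space UNIV \<sigma>" and p: "is_path b p" and h: "hd p \<in> T"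
    and far: "\<forall>t\<in>T. \<epsilon> \<le> \<sigma> t (last p)"
    and cb: "\<And>u v. v \<notin> T \<Longrightarrow> a * \<sigma> u v \<le> c u v"
    and cn: "\<And>u v. 0 \<le> c u v" and a: "0 \<le> a"
  shows "a * \<epsilon> \<le> pl c p"
proof -
  define n where "n = length p - 1"
  have ne: "p \<noteq> []" using p by (simp add: is_path_def)
  have ln: "last p = p!n" using ne by (simp add: n_def last_conv_nth)
  have hd0: "hd p = p!0" using ne by (simp add: hd_conv_nth)
  define J where "J = {i. i \<le> n \<and> p!i \<in> T}"
  have fJ: "finite J" unfolding J_def by simp
  have "0 \<in> J" unfolding J_def using h hd0 by simp
  define j where "j = Max J"
  have jJ: "j \<in> J" using fJ \<open>0 \<in> J\<close> j_def Max_in by blast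
  hence jn: "j \<le> n" and jT: "p!j \<in> T" unfolding J_def by auto
  have out: "p!(Suc i) \<notin> T" if "j \<le> i" "i < n" for i
  proof
    assume "p!(Suc i) \<in> T"
    hence "Suc i \<in> J" unfolding J_def using that by simp
    hence "Suc i \<le> j" using fJ j_def by simp
    thus False using that by simp
  qed
  have "\<epsilon> \<le> \<sigma> (p!j) (p!n)" using far jT ln by auto
  also have "\<dots> \<le> (\<Sum>i\<in>{j..<n}. \<sigma> (p!i) (p!(Suc i)))"
    using chain_tri[OF ms jn, of "\<lambda>i. p!i"] by simp
  finally have "a * \<epsilon> \<le> a * (\<Sum>i\<in>{j..<n}. \<sigma> (p!i) (p!(Suc i)))"
    using a mult_left_mono by blast
  also have "\<dots> = (\<Sum>i\<in>{j..<n}. a * \<sigma> (p!i) (p!(Suc i)))"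
    by (simp add: sum_distrib_left)
  also have "\<dots> \<le> (\<Sum>i\<in>{j..<n}. c (p!i) (p!(Suc i)))"
    by (rule sum_mono) (use cb out in auto)
  also have "\<dots> \<le> (\<Sum>i\<in>{..<n}. c (p!i) (p!(Suc i)))"
    by (rule sum_mono2) (use cn in auto)
  finally show ?thesis by (simp add: pl_def n_def)
qed

lemma path_extend:
  assumes p: "is_path b p" and bxy: "0 < b (last p) y" and cn: "\<And>u v. 0 \<le> c u v"
  shows "\<exists>q. is_path b q \<and> hd q = hd p \<and> last q = y \<and> pl c q \<le> pl c p + c (last p) y"
proof (cases "y \<in> set p")
  case True
  then obtain j where j: "j < length p" "p!j = y" by (auto simp: in_set_conv_nth)
  define q where "q = take (Suc j) p"
  have lq: "length q = Suc j" using j by (simp add: q_def)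
  have "is_path b q" using p j unfolding is_path_def q_def by auto
  moreover have "hd q = hd p" using j by (simp add: q_def hd_take)
  moreover have "last q = y"
  proof -
    have "q \<noteq> []" using lq by auto
    hence "last q = q ! j" using lq by (simp add: last_conv_nth)
    thus ?thesis using j by (simp add: q_def)
  qed
  moreover have "pl c q \<le> pl c p"
  proof -
    have "pl c q = (\<Sum>i<j. c (p!i) (p!Suc i))" using lq j by (simp add: pl_def q_def)
    also have "\<dots> \<le> (\<Sum>i<length p - 1. c (p!i) (p!Suc i))"
      by (rule sum_mono2) (use j cn in auto)
    finally show ?thesis by (simp add: pl_def)
  qed
  ultimately show ?thesis using cn[of "last p" y] by (intro exI[of _ q]) auto
next
  case False
  define q where "q = p @ [y]"
  have ne: "p \<noteq> []" using p by (simp add: is_path_def)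
  have "is_path b q"
    unfolding is_path_def q_def
  proof (intro conjI allI impI)
    show "distinct (p @ [y])" using p False by (simp add: is_path_def)
    fix i assume i: "Suc i < length (p @ [y])"
    show "0 < b ((p @ [y]) ! i) ((p @ [y]) ! Suc i)"
    proof (cases "Suc i < length p")
      case True thus ?thesis using p by (simp add: is_path_def nth_append)
    next
      case False
      hence "i = length p - 1" "Suc i = length p" using i by auto
      thus ?thesis using bxy ne by (simp add: nth_append last_conv_nth)
    qed
  qed auto
  moreover have "hd q = hd p" using ne by (simp add: q_def)
  moreover have "last q = y" by (simp add: q_def)
  moreover have "pl c q = pl c p + c (last p) y"
  proof -
    have "length p - 1 + 1 = length p" using ne by simp
    hence "pl c q = (\<Sum>i<Suc (length p - 1). c (q!i) (q!Suc i))"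
      by (simp add: pl_def q_def)
    also have "\<dots> = (\<Sum>i<length p - 1. c (q!i) (q!Suc i)) + c (q!(length p - 1)) (q!Suc (length p - 1))"
      by (rule sum.lessThan_Suc)
    also have "(\<Sum>i<length p - 1. c (q!i) (q!Suc i)) = pl c p"
      unfolding pl_def q_def by (rule sum.cong) (auto simp: nth_append)
    also have "q!(length p - 1) = last p" using ne by (simp add: q_def nth_append last_conv_nth)
    also have "q!(Suc (length p - 1)) = y" using ne by (simp add: q_def)
    finally show ?thesis .
  qed
  ultimately show ?thesis by (intro exI[of _ q]) auto
qed



lemma dir1:
  fixes b :: "'a::countable \<Rightarrow> 'a \<Rightarrow> real" and f :: "'a \<Rightarrow> complex"
  assumes wg: "weighted_graph b"
    and H: "\<forall>(m :: 'a \<Rightarrow> real) (\<sigma> :: 'a \<Rightarrow> 'a \<Rightarrow> real).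
             (\<forall>x. 0 \<le> m x) \<longrightarrow> m summable_on UNIV \<longrightarrow>
             Metric_space UNIV \<sigma> \<longrightarrow> intrinsic b m \<sigma> \<longrightarrow>
             Metric_space.mtotally_bounded UNIV \<sigma> UNIV"
    and fe: "finite_energy b f"
  shows "\<exists>C. \<forall>x. cmod (f x) \<le> C"
proof -
  have bnn: "\<And>x y. 0 \<le> b x y" and bsym: "\<And>x y. b x y = b y x"
    and bsum: "\<And>x. b x summable_on UNIV" using wg by (auto simp: weighted_graph_def)
  define deg where "deg x = infsum (b x) UNIV" for x
  have degnn: "0 \<le> deg x" for x unfolding deg_def by (rule infsum_nonneg) (use bnn in auto)
  define w where "w x = (1/2::real)^to_nat x / (1 + deg x)" for x
  have wpos: "0 < w x" for x unfolding w_def using degnn[of x] by auto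
  have wle1: "w x \<le> 1" for x
  proof -
    have "(1/2::real)^to_nat x \<le> 1" by (simp add: power_le_one)
    also have "1 \<le> 1 + deg x" using degnn[of x] by simp
    finally show ?thesis unfolding w_def using degnn[of x] by (simp add: divide_le_eq)
  qed
  have wdeg: "w x * deg x \<le> (1/2::real)^to_nat x" for x
  proof -
    have "w x * deg x = (1/2::real)^to_nat x * (deg x / (1 + deg x))" unfolding w_def by simp
    also have "\<dots> \<le> (1/2::real)^to_nat x * 1"
      by (rule mult_left_mono) (use degnn[of x] in auto)
    finally show ?thesis by simp
  qed
  define U where "U x y = (w x)^2 * b x y" for x y
  have Usum: "(\<lambda>(x,y). U x y) summable_on UNIV"
  proof (rule pair_summable[where h="\<lambda>x. (1/2::real)^to_nat x"])
    show "0 \<le> U x y" for x y unfolding U_def using bnn by simp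
    show "U x summable_on UNIV" for x unfolding U_def by (rule summable_on_cmult_right[OF bsum])
    show "infsum (U x) UNIV \<le> (1/2::real)^to_nat x" for x
    proof -
      have "infsum (U x) UNIV = (w x)^2 * deg x" unfolding U_def deg_def
        by (rule infsum_cmult_right) (use bsum in auto)
      also have "\<dots> = w x * (w x * deg x)" by (simp add: power2_eq_square)
      also have "\<dots> \<le> 1 * (1/2::real)^to_nat x"
        using wle1[of x] wdeg[of x] mult_nonneg_nonneg[OF less_imp_le[OF wpos[of x]] degnn[of x]]
        by (intro mult_mono) auto
      finally show ?thesis by simp
    qed
  qed (auto intro: geom_half_summable)
  have Usw: "(\<lambda>(x,y). U y x) summable_on UNIV"
    using Usum summable_on_swap[of "\<lambda>(x,y). U x y" UNIV UNIV] by simp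
  define E where "E x y = b x y * (cmod (f x - f y))^2" for x y
  have Esum: "(\<lambda>(x,y). E x y) summable_on UNIV" using fe unfolding finite_energy_def E_def .
  define d where "d x y = cmod (f x - f y) + (if x = y then 0 else w x + w y)" for x y
  define Hf where "Hf x y = b x y * (d x y)^2" for x y
  have Hbound: "Hf x y \<le> 2 * E x y + 4 * U x y + 4 * U y x" for x y
  proof -
    let ?a = "cmod (f x - f y)" and ?r = "(if x = y then 0 else w x + w y)"
    have r0: "0 \<le> ?r" using wpos[of x] wpos[of y] by auto
    have "(d x y)^2 \<le> 2 * ?a^2 + 2 * ?r^2" unfolding d_def
      by (smt (verit) sum_squares_bound power2_sum)
    also have "?r^2 \<le> 2 * (w x)^2 + 2 * (w y)^2"
      by (auto simp: power2_sum) (smt (verit) sum_squares_bound)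
    finally have "(d x y)^2 \<le> 2 * ?a^2 + 4 * (w x)^2 + 4 * (w y)^2" by simp
    hence "b x y * (d x y)^2 \<le> b x y * (2 * ?a^2 + 4 * (w x)^2 + 4 * (w y)^2)"
      by (rule mult_left_mono) (rule bnn)
    thus ?thesis unfolding Hf_def E_def U_def using bsym[of y x]
      by (simp add: algebra_simps)
  qed
  have Hsum: "(\<lambda>(x,y). Hf x y) summable_on UNIV"
  proof (rule summable_on_comparison_test)
    have "(\<lambda>z. (\<lambda>(x,y). 2 * E x y) z + (\<lambda>(x,y). 4 * U x y) z) summable_on UNIV"
      by (rule summable_on_add)
        (use summable_on_cmult_right[OF Esum, of 2] summable_on_cmult_right[OF Usum, of 4]
         in \<open>simp_all add: case_prod_beta\<close>)
    hence "(\<lambda>z. ((\<lambda>(x,y). 2 * E x y) z + (\<lambda>(x,y). 4 * U x y) z) + (\<lambda>(x,y). 4 * U y x) z) summable_on UNIV"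
      by (rule summable_on_add)
        (use summable_on_cmult_right[OF Usw, of 4] in \<open>simp_all add: case_prod_beta\<close>)
    moreover have "(\<lambda>(x,y). 2 * E x y + 4 * U x y + 4 * U y x) = (\<lambda>z. ((\<lambda>(x,y). 2 * E x y) z + (\<lambda>(x,y). 4 * U x y) z) + (\<lambda>(x,y). 4 * U y x) z)"
      by (auto simp: case_prod_beta)
    ultimately show "(\<lambda>(x,y). 2 * E x y + 4 * U x y + 4 * U y x) summable_on UNIV"
      by simp
    show "(\<lambda>(x,y). Hf x y) z \<le> (\<lambda>(x,y). 2 * E x y + 4 * U x y + 4 * U y x) z" for z
      using Hbound by (cases z) auto
    show "0 \<le> (\<lambda>(x,y). Hf x y) z" for z unfolding Hf_def using bnn by (cases z) auto
  qed
  define m where "m x = (1/2) * infsum (Hf x) UNIV" for x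
  have msum: "m summable_on UNIV" unfolding m_def
    by (rule summable_on_cmult_right[OF outer_summable[OF Hsum]])
  have mnn: "\<forall>x. 0 \<le> m x" unfolding m_def Hf_def
    by (auto intro!: infsum_nonneg simp: bnn)
  have intr: "intrinsic b m d"
    unfolding intrinsic_def m_def using section_summable[OF Hsum] unfolding Hf_def by simp
  have ms: "Metric_space UNIV d"
  proof
    fix x y z :: 'a
    show "0 \<le> d x y" unfolding d_def using wpos[of x] wpos[of y] by auto
    show "d x y = d y x" unfolding d_def by (simp add: norm_minus_commute)
    show "(d x y = 0) = (x = y)" unfolding d_def using wpos[of x] wpos[of y] norm_ge_zero[of "f x - f y"]
      by (cases "x = y") (simp, smt (verit))
    have t1: "cmod (f x - f z) \<le> cmod (f x - f y) + cmod (f y - f z)"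
      using norm_triangle_ineq[of "f x - f y" "f y - f z"] by simp
    have t2: "(if x = z then 0 else w x + w z) \<le> (if x = y then 0 else w x + w y) + (if y = z then 0 else w y + w z)"
      using wpos[of x] wpos[of y] wpos[of z] by auto
    show "d x z \<le> d x y + d y z" unfolding d_def using t1 t2 by simp
  qed
  have tb: "Metric_space.mtotally_bounded UNIV d UNIV" using H mnn msum ms intr by blast
  then obtain K where K: "finite K" "UNIV \<subseteq> (\<Union>k\<in>K. Metric_space.mball UNIV d k 1)"
    unfolding Metric_space.mtotally_bounded_def[OF ms] by (meson zero_less_one)
  show ?thesis
  proof (intro exI allI)
    fix x
    obtain k where k: "k \<in> K" "d k x < 1"
      using K(2) by (auto simp: Metric_space.mball_def[OF ms])
    have "cmod (f k - f x) < 1" using k(2) wpos unfolding d_def by (smt (verit))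
    hence "cmod (f x) \<le> cmod (f k) + 1"
      using norm_triangle_ineq2[of "f x" "f k"] norm_minus_commute[of "f k" "f x"] by simp
    also have "cmod (f k) \<le> (\<Sum>k\<in>K. cmod (f k))"
      by (rule member_le_sum) (use k K in auto)
    finally show "cmod (f x) \<le> (\<Sum>k\<in>K. cmod (f k)) + 1" by simp
  qed
qed



lemma four_pow: "(4::real)^n = 1 + (\<Sum>k<n. 3 * 4^k)"
  by (induction n) auto

lemma weight_exists:
  fixes m :: "'a::countable \<Rightarrow> real"
  assumes msum: "m summable_on UNIV" and mnn: "\<And>x. 0 \<le> m x"
  shows "\<exists>N :: 'a \<Rightarrow> nat. (\<lambda>x. 4^N x * m x) summable_on UNIV \<and> (\<forall>K. finite {x. N x \<le> K})"
proof -
  have "\<forall>k::nat. \<exists>G. finite G \<and> (\<forall>S. finite S \<longrightarrow> S \<inter> G = {} \<longrightarrow> sum m S \<le> (1/8::real)^k)"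
    using tail_small[OF msum mnn] by simp
  then obtain G where G: "\<And>k. finite (G k)"
    "\<And>k S. finite S \<Longrightarrow> S \<inter> G k = {} \<Longrightarrow> sum m S \<le> (1/8::real)^k"
    by metis
  define G' where "G' k = insert (from_nat k) (G k)" for k
  define N where "N x = (LEAST k. x \<in> G' k)" for x
  have Nle: "N x \<le> k" if "x \<in> G' k" for x k unfolding N_def using that by (rule Least_le)
  have Nin: "x \<in> G' (N x)" for x
    unfolding N_def by (rule LeastI[of _ "to_nat x"]) (simp add: G'_def)
  have fin: "finite {x. N x \<le> K}" for K
  proof (rule finite_subset)
    show "{x. N x \<le> K} \<subseteq> (\<Union>k\<le>K. G' k)" using Nin by auto
    show "finite (\<Union>k\<le>K. G' k)" using G(1) by (simp add: G'_def)
  qed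
  define M where "M = infsum m UNIV"
  have "(\<lambda>x. 4^N x * m x) summable_on UNIV"
  proof (rule summable_by_bound[where B="M + 6"])
    show "0 \<le> 4^N x * m x" for x using mnn[of x] by simp
    fix S :: "'a set" assume S: "finite S" "S \<subseteq> UNIV"
    define L where "L = (\<Sum>x\<in>S. N x)"
    have NL: "N x \<le> L" if "x \<in> S" for x unfolding L_def using S that by (intro member_le_sum) auto
    have inner: "(\<Sum>k<N x. 3 * 4^k * m x) = (\<Sum>k<L. if k < N x then 3 * 4^k * m x else 0)"
      if "x \<in> S" for x
    proof -
      have "(\<Sum>k<L. if k < N x then 3 * 4^k * m x else 0) = (\<Sum>k\<in>{..<L} \<inter> {k. k < N x}. 3 * 4^k * m x)"
        by (simp add: sum.inter_restrict)
      also have "{..<L} \<inter> {k. k < N x} = {..<N x}" using NL[OF that] by auto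
      finally show ?thesis by simp
    qed
    have "(\<Sum>x\<in>S. 4^N x * m x) = (\<Sum>x\<in>S. m x + (\<Sum>k<N x. 3 * 4^k * m x))"
      by (rule sum.cong) (auto simp: four_pow[of "N _"] algebra_simps sum_distrib_left)
    also have "\<dots> = (\<Sum>x\<in>S. m x) + (\<Sum>x\<in>S. \<Sum>k<L. if k < N x then 3 * 4^k * m x else 0)"
      by (simp add: sum.distrib inner)
    also have "(\<Sum>x\<in>S. \<Sum>k<L. if k < N x then 3 * 4^k * m x else 0)
             = (\<Sum>k<L. \<Sum>x\<in>S. if k < N x then 3 * 4^k * m x else 0)"
      by (rule sum.swap)
    also have "\<dots> \<le> (\<Sum>k<L. 3 * (1/2::real)^k)"
    proof (rule sum_mono)
      fix k assume "k \<in> {..<L}"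
      have "(\<Sum>x\<in>S. if k < N x then 3 * 4^k * m x else 0) = 3 * 4^k * (\<Sum>x\<in>S \<inter> {x. k < N x}. m x)"
        using S by (simp add: sum.inter_restrict sum_distrib_left if_distrib cong: if_cong)
      also have "(\<Sum>x\<in>S \<inter> {x. k < N x}. m x) \<le> (1/8)^k"
      proof (rule G(2))
        show "finite (S \<inter> {x. k < N x})" using S by simp
        show "S \<inter> {x. k < N x} \<inter> G k = {}"
          using Nle by (fastforce simp: G'_def)
      qed
      hence "3 * 4^k * (\<Sum>x\<in>S \<inter> {x. k < N x}. m x) \<le> 3 * 4^k * (1/8::real)^k"
        by (intro mult_left_mono) auto
      also have "3 * 4^k * (1/8::real)^k = 3 * (1/2)^k"
        by (simp add: power_mult_distrib[symmetric])
      finally show "(\<Sum>x\<in>S. if k < N x then 3 * 4^k * m x else 0) \<le> 3 * (1/2::real)^k" .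
    qed
    also have "(\<Sum>k<L. 3 * (1/2::real)^k) \<le> 6"
    proof -
      have "(\<Sum>k<L. (1/2::real)^k) = (1 - (1/2)^L) / (1/2)" by (simp add: sum_gp_strict)
      also have "\<dots> \<le> 2" by simp
      finally show ?thesis by (simp add: sum_distrib_left[symmetric])
    qed
    also have "(\<Sum>x\<in>S. m x) \<le> M"
      unfolding M_def using sum_le_infsum_nn[OF msum S(1)] mnn by auto
    finally show "(\<Sum>x\<in>S. 4^N x * m x) \<le> M + 6" by simp
  qed
  thus ?thesis using fin by blast
qed



lemma dir2:
  fixes b :: "'a::countable \<Rightarrow> 'a \<Rightarrow> real" and m :: "'a \<Rightarrow> real" and \<sigma> :: "'a \<Rightarrow> 'a \<Rightarrow> real"
  assumes wg: "weighted_graph b" and tree: "is_tree b"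
    and H2: "\<forall>f :: 'a \<Rightarrow> complex. finite_energy b f \<longrightarrow> (\<exists>C. \<forall>x. cmod (f x) \<le> C)"
    and mnn: "\<forall>x. 0 \<le> m x" and msum: "m summable_on UNIV"
    and ms: "Metric_space UNIV \<sigma>" and intr: "intrinsic b m \<sigma>"
  shows "Metric_space.mtotally_bounded UNIV \<sigma> UNIV"
proof (rule ccontr)
  assume ntb: "\<not> Metric_space.mtotally_bounded UNIV \<sigma> UNIV"
  then obtain \<epsilon> where \<epsilon>: "\<epsilon> > 0"
    "\<And>K. finite K \<Longrightarrow> \<exists>x. \<forall>t\<in>K. \<epsilon> \<le> \<sigma> t x"
    unfolding Metric_space.mtotally_bounded_def[OF ms] Metric_space.mball_def[OF ms]
    by (auto simp: subset_eq not_less)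
  have bnn: "\<And>x y. 0 \<le> b x y" and bsym: "\<And>x y. b x y = b y x"
    using wg by (auto simp: weighted_graph_def)
  have snn: "\<And>x y. 0 \<le> \<sigma> x y" and ssym: "\<And>x y. \<sigma> x y = \<sigma> y x"
    using Metric_space.nonneg[OF ms] Metric_space.commute[OF ms] by auto
  obtain N :: "'a \<Rightarrow> nat" where Nsum: "(\<lambda>x. 4^N x * m x) summable_on UNIV"
    and Nfin: "\<And>K. finite {x. N x \<le> K}"
    using weight_exists[OF msum] mnn by blast
  define w where "w x = (4::real)^N x" for x
  have wpos: "0 < w x" for x unfolding w_def by simp
  define c where "c x y = \<sigma> x y * sqrt (w x + w y)" for x y
  have cnn: "\<And>u v. 0 \<le> c u v" unfolding c_def using snn wpos
    by (simp add: add_nonneg_nonneg less_imp_le)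
  have csym: "\<And>u v. c u v = c v u" unfolding c_def using ssym by (simp add: add.commute)
  define g where "g x y = w x * (b x y * (\<sigma> x y)^2)" for x y
  have gsum: "(\<lambda>(x,y). g x y) summable_on UNIV"
  proof (rule pair_summable[where h="\<lambda>x. w x * (2 * m x)"])
    show "0 \<le> g x y" for x y unfolding g_def using wpos[of x] bnn[of x y] by simp
    show "g x summable_on UNIV" for x unfolding g_def
      by (rule summable_on_cmult_right) (use intr in \<open>simp add: intrinsic_def\<close>)
    show "infsum (g x) UNIV \<le> w x * (2 * m x)" for x
    proof -
      have "infsum (g x) UNIV = w x * infsum (\<lambda>y. b x y * (\<sigma> x y)^2) UNIV" unfolding g_def
        by (rule infsum_cmult_right) (use intr in \<open>simp add: intrinsic_def\<close>)
      also have "\<dots> \<le> w x * (2 * m x)"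
        by (rule mult_left_mono) (use intr wpos[of x] in \<open>auto simp: intrinsic_def less_imp_le mult.commute\<close>)
      finally show ?thesis .
    qed
    show "(\<lambda>x. w x * (2 * m x)) summable_on UNIV"
      using summable_on_cmult_right[OF Nsum, of 2] unfolding w_def by (simp add: algebra_simps)
    show "0 \<le> w x * (2 * m x)" for x using wpos[of x] mnn by simp
  qed
  have gsw: "(\<lambda>(x,y). g y x) summable_on UNIV"
    using gsum summable_on_swap[of "\<lambda>(x,y). g x y" UNIV UNIV] by simp
  have csum: "(\<lambda>(x,y). b x y * (c x y)^2) summable_on UNIV"
  proof -
    have "(\<lambda>z. (\<lambda>(x,y). g x y) z + (\<lambda>(x,y). g y x) z) summable_on UNIV"
      by (rule summable_on_add[OF gsum gsw])
    moreover have "(\<lambda>(x,y). b x y * (c x y)^2) = (\<lambda>z. (\<lambda>(x,y). g x y) z + (\<lambda>(x,y). g y x) z)"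
    proof (rule ext, clarsimp)
      fix x y
      have "(c x y)^2 = (\<sigma> x y)^2 * (w x + w y)" unfolding c_def
        using wpos[of x] wpos[of y] by (simp add: power_mult_distrib)
      thus "b x y * (c x y)^2 = g x y + g y x" unfolding g_def using bsym[of y x] ssym[of y x]
        by (simp add: algebra_simps)
    qed
    ultimately show ?thesis by simp
  qed
  define r0 where "r0 = (from_nat 0 :: 'a)"
  define P where "P x = {p. is_path b p \<and> hd p = r0 \<and> last p = x}" for x
  define F where "F x = Inf (pl c ` P x)" for x
  have Pne: "P x \<noteq> {}" for x
  proof (cases "x = r0")
    case True thus ?thesis unfolding P_def is_path_def by (intro ex_in_conv[THEN iffD1] exI[of _ "[r0]"]) auto
  next
    case False
    then obtain p where "is_path b p" "hd p = r0" "last p = x" using tree unfolding is_tree_def by metis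
    thus ?thesis unfolding P_def by blast
  qed
  have plnn: "0 \<le> pl c p" for p unfolding pl_def by (rule sum_nonneg) (use cnn in auto)
  have bddb: "bdd_below (pl c ` P x)" for x using plnn by (intro bdd_belowI[of _ 0]) auto
  have Flow: "F x \<le> pl c p" if "p \<in> P x" for x p
    unfolding F_def using bddb that by (auto intro: cInf_lower)
  have Flip: "F y \<le> F x + c x y" if bxy: "0 < b x y" for x y
  proof -
    have "F y - c x y \<le> F x" unfolding F_def[of x]
    proof (rule cInf_greatest)
      show "pl c ` P x \<noteq> {}" using Pne by auto
      fix r assume "r \<in> pl c ` P x"
      then obtain p where p: "p \<in> P x" "r = pl c p" by auto
      then obtain q where "is_path b q" "hd q = hd p" "last q = y" "pl c q \<le> pl c p + c (last p) y"
        using path_extend[of b p y c] bxy cnn p(1) unfolding P_def by auto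
      hence "q \<in> P y" "pl c q \<le> pl c p + c x y" using p unfolding P_def by auto
      thus "F y - c x y \<le> r" using Flow[of q y] p by simp
    qed
    thus ?thesis by simp
  qed
  have Fdiff: "\<bar>F x - F y\<bar> \<le> c x y" if "0 < b x y" for x y
    using Flip[OF that] Flip[of y x] that bsym[of x y] csym[of x y] by auto
  have fe: "finite_energy b (\<lambda>x. complex_of_real (F x))"
    unfolding finite_energy_def
  proof (rule summable_on_comparison_test[OF csum])
    fix z :: "'a \<times> 'a"
    obtain x y where z: "z = (x,y)" by (cases z)
    have "b x y * (cmod (complex_of_real (F x) - complex_of_real (F y)))^2 \<le> b x y * (c x y)^2"
    proof (cases "0 < b x y")
      case True
      have "(cmod (complex_of_real (F x) - complex_of_real (F y)))^2 = \<bar>F x - F y\<bar>^2"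
        by (simp flip: of_real_diff)
      also have "\<dots> \<le> (c x y)^2" using Fdiff[OF True] by (intro power_mono) auto
      finally show ?thesis using bnn by (intro mult_left_mono) auto
    next
      case False hence "b x y = 0" using bnn[of x y] by simp
      thus ?thesis by simp
    qed
    thus "(\<lambda>(x, y). b x y * (cmod (complex_of_real (F x) - complex_of_real (F y)))\<^sup>2) z
          \<le> (\<lambda>(x,y). b x y * (c x y)^2) z" using z by simp
    show "0 \<le> (\<lambda>(x, y). b x y * (cmod (complex_of_real (F x) - complex_of_real (F y)))\<^sup>2) z"
      using z bnn by simp
  qed
  then obtain C where C: "\<And>x. cmod (complex_of_real (F x)) \<le> C" using H2 by blast
  obtain K where K: "C / \<epsilon> < 2^K" using real_arch_pow[of 2 "C / \<epsilon>"] by auto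
  define T where "T = insert r0 {x. N x \<le> K}"
  have fT: "finite T" unfolding T_def using Nfin by simp
  obtain x where x: "\<forall>t\<in>T. \<epsilon> \<le> \<sigma> t x" using \<epsilon>(2)[OF fT] by blast
  have cb: "(2::real)^K * \<sigma> u v \<le> c u v" if "v \<notin> T" for u v
  proof -
    have "K < N v" using that unfolding T_def by auto
    hence "(4::real)^K \<le> w v" unfolding w_def by (intro power_increasing) auto
    moreover have "((2::real)^K)^2 = 4^K"
      by (simp only: power2_eq_square power_mult_distrib[symmetric]) simp
    ultimately have "((2::real)^K)^2 \<le> w u + w v" using wpos[of u] by simp
    hence "(2::real)^K \<le> sqrt (w u + w v)" by (rule real_le_rsqrt)
    thus ?thesis unfolding c_def using snn[of u v] by (simp add: mult.commute mult_left_mono)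
  qed
  have "2^K * \<epsilon> \<le> F x" unfolding F_def
  proof (rule cInf_greatest)
    show "pl c ` P x \<noteq> {}" using Pne by auto
    fix r assume "r \<in> pl c ` P x"
    then obtain p where p: "p \<in> P x" "r = pl c p" by auto
    have "2^K * \<epsilon> \<le> pl c p"
      by (rule path_lower[OF ms, where T=T]) (use p x cb cnn in \<open>auto simp: P_def T_def\<close>)
    thus "2^K * \<epsilon> \<le> r" using p by simp
  qed
  moreover have "F x \<le> C" using C[of x] by simp
  moreover have "C < 2^K * \<epsilon>" using K \<epsilon>(1) by (simp add: divide_less_eq mult.commute)
  ultimately show False by simp
qed


theorem mainTheorem19:
  fixes b :: "'a::countable \<Rightarrow> 'a \<Rightarrow> real"
  assumes "infinite (UNIV :: 'a set)"
    and "weighted_graph b"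
    and "is_tree b"
  shows "(\<forall>(m :: 'a \<Rightarrow> real) (\<sigma> :: 'a \<Rightarrow> 'a \<Rightarrow> real).
             (\<forall>x. 0 \<le> m x) \<longrightarrow> m summable_on UNIV \<longrightarrow>
             Metric_space UNIV \<sigma> \<longrightarrow> intrinsic b m \<sigma> \<longrightarrow>
             Metric_space.mtotally_bounded UNIV \<sigma> UNIV)
         \<longleftrightarrow> (\<forall>f :: 'a \<Rightarrow> complex. finite_energy b f \<longrightarrow> (\<exists>C. \<forall>x. cmod (f x) \<le> C))"
proof
  assume H: "\<forall>(m :: 'a \<Rightarrow> real) (\<sigma> :: 'a \<Rightarrow> 'a \<Rightarrow> real).
             (\<forall>x. 0 \<le> m x) \<longrightarrow> m summable_on UNIV \<longrightarrow>
             Metric_space UNIV \<sigma> \<longrightarrow> intrinsic b m \<sigma> \<longrightarrow>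
             Metric_space.mtotally_bounded UNIV \<sigma> UNIV"
  show "\<forall>f :: 'a \<Rightarrow> complex. finite_energy b f \<longrightarrow> (\<exists>C. \<forall>x. cmod (f x) \<le> C)"
    using dir1[OF assms(2) H] by blast
next
  assume H2: "\<forall>f :: 'a \<Rightarrow> complex. finite_energy b f \<longrightarrow> (\<exists>C. \<forall>x. cmod (f x) \<le> C)"
  show "\<forall>(m :: 'a \<Rightarrow> real) (\<sigma> :: 'a \<Rightarrow> 'a \<Rightarrow> real).
             (\<forall>x. 0 \<le> m x) \<longrightarrow> m summable_on UNIV \<longrightarrow>
             Metric_space UNIV \<sigma> \<longrightarrow> intrinsic b m \<sigma> \<longrightarrow>
             Metric_space.mtotally_bounded UNIV \<sigma> UNIV"
    using dir2[OF assms(2) assms(3) H2] by blast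
qed

end
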